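(* Let $G$ be a $K_4$-free graph whose diamonds are mutually edge-disjoint. Then $\theta_e(G)=|E(G)|-2t(G)+d(G)$.
   Context: All graphs are finite and simple. A diamond is a subgraph isomorphic to $K_4$ minus one edge. $t(G)$ is the number of triangles of $G$ and $d(G)$ the number of diamonds of $G$. An edge clique cover of $G$ is a collection of cliques of $G$ such that every edge has both endpoints in some clique of the collection; $\theta_e(G)$ is the minimum size of an edge clique cover of $G$. *)

theory Defs
  imports Main
begin

definition simple_graph :: "'a set \<Rightarrow> 'a set set \<Rightarrow> bool" where
  "simple_graph V E \<longleftrightarrow> finite V \<and>
     (\<forall>e\<in>E. \<exists>u v. u \<noteq> v \<and> u \<in> V \<and> v \<in> V \<and> e = {u, v})"

definition clique :: "'a set \<Rightarrow> 'a set set \<Rightarrow> 'a set \<Rightarrow> bool" where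
  "clique V E K \<longleftrightarrow> K \<subseteq> V \<and> (\<forall>u\<in>K. \<forall>v\<in>K. u \<noteq> v \<longrightarrow> {u, v} \<in> E)"

definition K4_free :: "'a set \<Rightarrow> 'a set set \<Rightarrow> bool" where
  "K4_free V E \<longleftrightarrow> \<not> (\<exists>K. clique V E K \<and> card K = 4)"

definition triangles :: "'a set \<Rightarrow> 'a set set \<Rightarrow> 'a set set" where
  "triangles V E = {T. clique V E T \<and> card T = 3}"

definition num_triangles :: "'a set \<Rightarrow> 'a set set \<Rightarrow> nat" where
  "num_triangles V E = card (triangles V E)"

text \<open>Diamonds: subgraphs isomorphic to K4 minus an edge. Such a subgraph has no isolated
  vertices, hence is determined by its edge set: a set of 5 edges of G spanning exactly
  4 vertices (any 5 edges on 4 vertices form K4 minus one edge).\<close>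
definition diamonds :: "'a set \<Rightarrow> 'a set set \<Rightarrow> 'a set set set" where
  "diamonds V E = {D. D \<subseteq> E \<and> card D = 5 \<and> card (\<Union>D) = 4}"

definition num_diamonds :: "'a set \<Rightarrow> 'a set set \<Rightarrow> nat" where
  "num_diamonds V E = card (diamonds V E)"

definition diamonds_edge_disjoint :: "'a set \<Rightarrow> 'a set set \<Rightarrow> bool" where
  "diamonds_edge_disjoint V E \<longleftrightarrow>
     (\<forall>D1\<in>diamonds V E. \<forall>D2\<in>diamonds V E. D1 \<noteq> D2 \<longrightarrow> D1 \<inter> D2 = {})"

definition edge_clique_cover :: "'a set \<Rightarrow> 'a set set \<Rightarrow> 'a set set \<Rightarrow> bool" where
  "edge_clique_cover V E C \<longleftrightarrow> (\<forall>K\<in>C. clique V E K) \<and> (\<forall>e\<in>E. \<exists>K\<in>C. e \<subseteq> K)"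

definition theta_e :: "'a set \<Rightarrow> 'a set set \<Rightarrow> nat" where
  "theta_e V E = (LEAST k. \<exists>C. finite C \<and> card C = k \<and> edge_clique_cover V E C)"

end

theory Submission
  imports Defs
begin

locale G =
  fixes V :: "'a set" and E :: "'a set set"
  assumes sg: "simple_graph V E" and k4: "K4_free V E" and dj: "diamonds_edge_disjoint V E"
begin

lemma finV: "finite V" using sg by (simp add: simple_graph_def)

lemma edgeD: "e \<in> E \<Longrightarrow> \<exists>u v. u \<noteq> v \<and> u \<in> V \<and> v \<in> V \<and> e = {u, v}"
  using sg by (simp add: simple_graph_def)

lemma EPow: "E \<subseteq> Pow V"
proof
  fix e assume "e \<in> E"
  then obtain u v where "u \<in> V" "v \<in> V" "e = {u,v}" using edgeD by blast
  then show "e \<in> Pow V" by auto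
qed

lemma finE: "finite E" using EPow finV by (simp add: finite_subset)

lemma edge_ne: "{u, v} \<in> E \<Longrightarrow> u \<noteq> v"
  by (metis doubleton_eq_iff edgeD insert_absorb2)

lemma edge_V: "{u, v} \<in> E \<Longrightarrow> u \<in> V \<and> v \<in> V"
  using EPow by blast

lemma esym: "{u, v} \<in> E \<Longrightarrow> {v, u} \<in> E" by (simp add: insert_commute)

lemma card_edge: "e \<in> E \<Longrightarrow> card e = 2"
  using edgeD by fastforce

lemma clique_sub: "clique V E K \<Longrightarrow> L \<subseteq> K \<Longrightarrow> clique V E L"
  unfolding clique_def by blast

lemma K4: "{a,b} \<in> E \<Longrightarrow> {a,c} \<in> E \<Longrightarrow> {b,c} \<in> E \<Longrightarrow> {a,x} \<in> E \<Longrightarrow> {b,x} \<in> E \<Longrightarrow> {c,x} \<in> E \<Longrightarrow> False"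
proof -
  assume h: "{a,b} \<in> E" "{a,c} \<in> E" "{b,c} \<in> E" "{a,x} \<in> E" "{b,x} \<in> E" "{c,x} \<in> E"
  have d: "a \<noteq> b" "a \<noteq> c" "b \<noteq> c" "a \<noteq> x" "b \<noteq> x" "c \<noteq> x" using h edge_ne by auto
  have "clique V E {a,b,c,x}" unfolding clique_def using h edge_V
    by (auto simp: insert_commute)
  moreover have "card {a,b,c,x} = 4" using d by auto
  ultimately show False using k4 unfolding K4_free_def by blast
qed

lemma tri_iff: "T \<in> triangles V E \<longleftrightarrow> (\<exists>a b c. T = {a,b,c} \<and> {a,b} \<in> E \<and> {a,c} \<in> E \<and> {b,c} \<in> E)"
proof
  assume "T \<in> triangles V E"
  then have c: "clique V E T" "card T = 3" by (auto simp: triangles_def)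
  then obtain a b c where "T = {a,b,c}" "a \<noteq> b" "b \<noteq> c" "a \<noteq> c" by (auto simp: card_3_iff)
  moreover have "{a,b} \<in> E" "{a,c} \<in> E" "{b,c} \<in> E"
    using c(1) \<open>T = {a,b,c}\<close> \<open>a \<noteq> b\<close> \<open>b \<noteq> c\<close> \<open>a \<noteq> c\<close> unfolding clique_def by auto
  ultimately show "\<exists>a b c. T = {a,b,c} \<and> {a,b} \<in> E \<and> {a,c} \<in> E \<and> {b,c} \<in> E"
    by blast
next
  assume "\<exists>a b c. T = {a,b,c} \<and> {a,b} \<in> E \<and> {a,c} \<in> E \<and> {b,c} \<in> E"
  then obtain a b c where h: "T = {a,b,c}" "{a,b} \<in> E" "{a,c} \<in> E" "{b,c} \<in> E" by blast
  have d: "a \<noteq> b" "a \<noteq> c" "b \<noteq> c" using h edge_ne by auto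
  have "clique V E T" unfolding clique_def using h edge_V by (auto simp: insert_commute)
  moreover have "card T = 3" using d h by auto
  ultimately show "T \<in> triangles V E" by (simp add: triangles_def)
qed

definition dia :: "'a \<Rightarrow> 'a \<Rightarrow> 'a \<Rightarrow> 'a \<Rightarrow> 'a set set" where
  "dia a b c x = {{a,b},{a,c},{b,c},{a,x},{b,x}}"

lemma dia_in: assumes h: "{a,b} \<in> E" "{a,c} \<in> E" "{b,c} \<in> E" "{a,x} \<in> E" "{b,x} \<in> E" "c \<noteq> x"
  shows "dia a b c x \<in> diamonds V E"
proof -
  have d: "a \<noteq> b" "a \<noteq> c" "b \<noteq> c" "a \<noteq> x" "b \<noteq> x" using h edge_ne by auto
  have "card (dia a b c x) = 5" using d h(6) by (auto simp: dia_def doubleton_eq_iff)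
  moreover have "\<Union>(dia a b c x) = {a,b,c,x}" by (auto simp: dia_def)
  moreover have "card {a,b,c,x} = 4" using d h(6) by auto
  ultimately show ?thesis using h unfolding diamonds_def dia_def by auto
qed


lemma dia_edges: "D = dia a b c x \<Longrightarrow> D \<subseteq> E \<Longrightarrow> {a,b} \<in> E \<and> {a,c} \<in> E \<and> {b,c} \<in> E \<and> {a,x} \<in> E \<and> {b,x} \<in> E"
  by (auto simp: dia_def)

lemma dia_form: assumes "D \<in> diamonds V E"
  shows "\<exists>a b c x. {a,b} \<in> E \<and> {a,c} \<in> E \<and> {b,c} \<in> E \<and> {a,x} \<in> E \<and> {b,x} \<in> E \<and> c \<noteq> x \<and> D = dia a b c x"
proof -
  have DE: "D \<subseteq> E" and c5: "card D = 5" and c4: "card (\<Union>D) = 4" using assms by (auto simp: diamonds_def)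
  have "card (\<Union>D) = Suc 3" using c4 by simp
  then obtain p B where pB: "\<Union>D = insert p B" "p \<notin> B" "card B = 3"
    using card_Suc_eq[of "\<Union>D" 3] by blast
  then obtain q r s where B: "B = {q,r,s}" "q \<noteq> r" "r \<noteq> s" "q \<noteq> s" by (auto simp: card_3_iff)
  have S: "\<Union>D = {p,q,r,s}" and d: "p \<noteq> q" "p \<noteq> r" "p \<noteq> s" "q \<noteq> r" "r \<noteq> s" "q \<noteq> s"
    using pB B by auto
  define P6 where "P6 = {{p,q},{p,r},{p,s},{q,r},{q,s},{r,s}}"
  have sub: "D \<subseteq> P6"
  proof
    fix f assume f: "f \<in> D"
    then obtain u v where uv: "u \<noteq> v" "f = {u,v}" using DE edgeD by blast
    have "u \<in> {p,q,r,s}" "v \<in> {p,q,r,s}" using f uv S by auto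
    then show "f \<in> P6" using uv unfolding P6_def by (elim insertE emptyE) (simp_all add: doubleton_eq_iff)
  qed
  have c6: "card P6 = 6" using d unfolding P6_def by (auto simp: doubleton_eq_iff)
  obtain m where m: "m \<in> P6" "m \<notin> D"
  proof -
    have "\<not> P6 \<subseteq> D"
    proof
      assume "P6 \<subseteq> D"
      then have "card P6 \<le> card D" using card_mono finE DE finite_subset by metis
      then show False using c5 c6 by simp
    qed
    then show ?thesis using that by blast
  qed
  have neq: "{p,q} \<noteq> {p,r}" "{p,q} \<noteq> {p,s}" "{p,q} \<noteq> {q,r}" "{p,q} \<noteq> {q,s}" "{p,q} \<noteq> {r,s}" "{p,r} \<noteq> {p,s}" "{p,r} \<noteq> {q,r}" "{p,r} \<noteq> {q,s}" "{p,r} \<noteq> {r,s}" "{p,s} \<noteq> {q,r}" "{p,s} \<noteq> {q,s}" "{p,s} \<noteq> {r,s}" "{q,r} \<noteq> {q,s}" "{q,r} \<noteq> {r,s}" "{q,s} \<noteq> {r,s}"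
    using d by (auto simp: doubleton_eq_iff)
  have fin6: "finite P6" unfolding P6_def by simp
  have Deq: "D = P6 - {m}"
  proof (rule card_subset_eq)
    show "finite (P6 - {m})" using fin6 by simp
    show "D \<subseteq> P6 - {m}" using sub m by blast
    show "card D = card (P6 - {m})" using c5 c6 m fin6 by simp
  qed
  have fin: "\<And>a b c x. P6 - {m} = dia a b c x \<Longrightarrow> c \<noteq> x \<Longrightarrow> ?thesis"
    using Deq DE dia_edges by metis
  from m(1) consider "m = {p,q}" | "m = {p,r}" | "m = {p,s}" | "m = {q,r}" | "m = {q,s}" | "m = {r,s}"
    unfolding P6_def by auto
  then show ?thesis
  proof cases
    case 1 then show ?thesis using d neq by (intro fin[of r s p q]) (simp_all add: P6_def dia_def insert_Diff_if insert_commute)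
  next
    case 2 then show ?thesis using d neq by (intro fin[of q s p r]) (simp_all add: P6_def dia_def insert_Diff_if insert_commute)
  next
    case 3 then show ?thesis using d neq by (intro fin[of q r p s]) (simp_all add: P6_def dia_def insert_Diff_if insert_commute)
  next
    case 4 then show ?thesis using d neq by (intro fin[of p s q r]) (simp_all add: P6_def dia_def insert_Diff_if insert_commute)
  next
    case 5 then show ?thesis using d neq by (intro fin[of p r q s]) (simp_all add: P6_def dia_def insert_Diff_if insert_commute)
  next
    case 6 then show ?thesis using d neq by (intro fin[of p q r s]) (simp_all add: P6_def dia_def insert_Diff_if insert_commute)
  qed
qed


definition Nb :: "'a \<Rightarrow> 'a \<Rightarrow> 'a set" where
  "Nb a b = {z. {a,z} \<in> E \<and> {b,z} \<in> E}"

lemma Nb_sub: "Nb a b \<subseteq> V" unfolding Nb_def using edge_V by blast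

lemma Nb_fin: "finite (Nb a b)" using Nb_sub finV finite_subset by blast

lemma Nb_sym: "Nb a b = Nb b a" unfolding Nb_def by blast

lemma NbD: "z \<in> Nb a b \<Longrightarrow> {a,z} \<in> E \<and> {b,z} \<in> E" unfolding Nb_def by blast

lemma NbI: "{a,z} \<in> E \<Longrightarrow> {b,z} \<in> E \<Longrightarrow> z \<in> Nb a b" unfolding Nb_def by blast

lemma diam_neq: assumes "D1 \<in> diamonds V E" "D2 \<in> diamonds V E" "e \<in> D1" "e \<in> D2" "f \<in> D1" "f \<notin> D2"
  shows False
proof -
  have "D1 \<noteq> D2" using assms by blast
  then have "D1 \<inter> D2 = {}" using dj assms(1,2) unfolding diamonds_edge_disjoint_def by blast
  then show False using assms(3,4) by blast
qed

lemma three: assumes ab: "{a,b} \<in> E" and c: "c \<in> Nb a b" and x: "x \<in> Nb a b" and y: "y \<in> Nb a b"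
  shows "c = x \<or> c = y \<or> x = y"
proof (rule ccontr)
  assume h: "\<not> (c = x \<or> c = y \<or> x = y)"
  have e: "{a,c} \<in> E" "{b,c} \<in> E" "{a,x} \<in> E" "{b,x} \<in> E" "{a,y} \<in> E" "{b,y} \<in> E"
    using c x y NbD by auto
  have d: "a \<noteq> b" "a \<noteq> c" "b \<noteq> c" "a \<noteq> x" "b \<noteq> x" "a \<noteq> y" "b \<noteq> y" using e ab edge_ne by auto
  have D1: "dia a b c x \<in> diamonds V E" using dia_in ab e h by blast
  have D2: "dia a b c y \<in> diamonds V E" using dia_in ab e h by blast
  show False
    by (rule diam_neq[OF D1 D2, of "{a,b}" "{a,x}"]) (use d h in \<open>auto simp: dia_def doubleton_eq_iff\<close>)
qed

lemma keyA: assumes ab: "{a,b} \<in> E" shows "card (Nb a b) \<le> 2"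
proof (cases "Nb a b = {}")
  case True then show ?thesis by simp
next
  case False
  then obtain c where c: "c \<in> Nb a b" by blast
  show ?thesis
  proof (cases "Nb a b \<subseteq> {c}")
    case True
    then have "card (Nb a b) \<le> card {c}" by (intro card_mono) auto
    then show ?thesis by simp
  next
    case False
    then obtain x where x: "x \<in> Nb a b" "x \<noteq> c" by blast
    have "Nb a b \<subseteq> {c,x}" using three[OF ab c x(1)] x by blast
    then have "card (Nb a b) \<le> card {c,x}" by (intro card_mono) auto
    also have "\<dots> \<le> 2" by (simp add: card_insert_if)
    finally show ?thesis .
  qed
qed

lemma keyB: assumes e: "{a,b} \<in> E" "{a,c} \<in> E" "{b,c} \<in> E"
  and x: "x \<in> Nb a b" "x \<noteq> c" and y: "y \<in> Nb a c" "y \<noteq> b"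
  shows False
proof -
  have e2: "{a,x} \<in> E" "{b,x} \<in> E" "{a,y} \<in> E" "{c,y} \<in> E" using x y NbD by auto
  have xy: "x \<noteq> y"
  proof
    assume "x = y"
    then show False using K4[of a b c x] e e2 by auto
  qed
  have d: "a \<noteq> b" "a \<noteq> c" "b \<noteq> c" "a \<noteq> x" "b \<noteq> x" "a \<noteq> y" "c \<noteq> y" using e e2 edge_ne by auto
  have D1: "dia a b c x \<in> diamonds V E" using dia_in e e2 x by blast
  have D2: "dia a c b y \<in> diamonds V E" using dia_in[of a c b y] e e2 y esym by blast
  show False
    by (rule diam_neq[OF D1 D2, of "{a,b}" "{b,x}"]) (use d x y xy in \<open>auto simp: dia_def doubleton_eq_iff\<close>)
qed

abbreviation "tri \<equiv> triangles V E"

lemma tri_card: "T \<in> tri \<Longrightarrow> card T = 3" by (simp add: triangles_def)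

lemma tri_fin: "finite tri"
proof -
  have "tri \<subseteq> Pow V" unfolding triangles_def clique_def by blast
  then show ?thesis using finV finite_subset by blast
qed

lemma tri_sup: assumes ab: "{a,b} \<in> E"
  shows "{T \<in> tri. {a,b} \<subseteq> T} = (\<lambda>z. {a,b,z}) ` Nb a b"
proof
  have dab: "a \<noteq> b" using ab edge_ne by blast
  show "{T \<in> tri. {a,b} \<subseteq> T} \<subseteq> (\<lambda>z. {a,b,z}) ` Nb a b"
  proof
    fix T assume "T \<in> {T \<in> tri. {a,b} \<subseteq> T}"
    then have T: "clique V E T" "card T = 3" "{a,b} \<subseteq> T" by (auto simp: triangles_def)
    have fT: "finite T" using T(2) card.infinite by fastforce
    have "card (T - {a,b}) = 1" using T fT dab by (simp add: card_Diff_subset)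
    then obtain z where z: "T - {a,b} = {z}" by (auto simp: card_Suc_eq)
    then have Tz: "T = {a,b,z}" using T(3) by auto
    have "z \<noteq> a" "z \<noteq> b" using z by auto
    then have "{a,z} \<in> E" "{b,z} \<in> E" using T(1) Tz unfolding clique_def by auto
    then show "T \<in> (\<lambda>z. {a,b,z}) ` Nb a b" using Tz NbI by blast
  qed
  show "(\<lambda>z. {a,b,z}) ` Nb a b \<subseteq> {T \<in> tri. {a,b} \<subseteq> T}"
  proof
    fix T assume "T \<in> (\<lambda>z. {a,b,z}) ` Nb a b"
    then obtain z where z: "z \<in> Nb a b" "T = {a,b,z}" by blast
    have e: "{a,z} \<in> E" "{b,z} \<in> E" using z(1) NbD by auto
    have "T \<in> tri" unfolding tri_iff
      by (rule exI[of _ a], rule exI[of _ b], rule exI[of _ z]) (use ab e z(2) in simp)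
    then show "T \<in> {T \<in> tri. {a,b} \<subseteq> T}" using z by auto
  qed
qed

lemma tri_cnt: assumes ab: "{a,b} \<in> E" shows "card {T \<in> tri. {a,b} \<subseteq> T} = card (Nb a b)"
proof -
  have "inj_on (\<lambda>z. {a,b,z}) (Nb a b)"
  proof
    fix z z' assume h: "z \<in> Nb a b" "z' \<in> Nb a b" "{a,b,z} = {a,b,z'}"
    have "z \<noteq> a" "z \<noteq> b" "z' \<noteq> a" "z' \<noteq> b" using h(1,2) NbD edge_ne by blast+
    then show "z = z'" using h(3) by (metis insertCI insertE singletonD)
  qed
  then show ?thesis using tri_sup[OF ab] card_image by metis
qed


definition TE :: "'a set set" where "TE = {e \<in> E. \<exists>T\<in>tri. e \<subseteq> T}"
definition N0 :: "'a set set" where "N0 = E - TE"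

lemma ext_tri: assumes e: "e \<in> E" and K: "clique V E K" "e \<subseteq> K" "K \<noteq> e"
  shows "\<exists>T\<in>tri. e \<subseteq> T \<and> T \<subseteq> K"
proof -
  obtain u v where uv: "u \<noteq> v" "e = {u,v}" using e edgeD by blast
  obtain w where w: "w \<in> K" "w \<notin> e" using K by blast
  have sub: "{u,v,w} \<subseteq> K" using w K(2) uv by auto
  have "clique V E {u,v,w}" using clique_sub[OF K(1) sub] .
  moreover have "card {u,v,w} = 3" using uv w by auto
  ultimately have "{u,v,w} \<in> tri" by (simp add: triangles_def)
  then show ?thesis using sub uv by (intro bexI[of _ "{u,v,w}"]) auto
qed

lemma tri_max: assumes K: "clique V E K" and T: "T \<in> tri" "T \<subseteq> K" shows "K = T"
proof (rule ccontr)
  assume "K \<noteq> T"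
  then obtain z where z: "z \<in> K" "z \<notin> T" using T by blast
  have c: "clique V E (insert z T)" using clique_sub[OF K] z T by blast
  have "finite T" using tri_card[OF T(1)] card.infinite by fastforce
  then have "card (insert z T) = 4" using z tri_card[OF T(1)] by simp
  then show False using c k4 unfolding K4_free_def by blast
qed

definition priv :: "'a set \<Rightarrow> 'a set \<Rightarrow> bool" where
  "priv T e \<longleftrightarrow> e \<in> E \<and> e \<subseteq> T \<and> (\<forall>T'\<in>tri. e \<subseteq> T' \<longrightarrow> T' = T)"

lemma priv_ex: assumes T: "T \<in> tri" shows "\<exists>e. priv T e"
proof -
  obtain a b c where abc: "T = {a,b,c}" "{a,b} \<in> E" "{a,c} \<in> E" "{b,c} \<in> E" using T[unfolded tri_iff] by auto
  show ?thesis
  proof (cases "Nb a b \<subseteq> {c}")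
    case True
    have "priv T {a,b}" unfolding priv_def
    proof (intro conjI ballI impI)
      fix T' assume "T' \<in> tri" "{a,b} \<subseteq> T'"
      then have "T' \<in> (\<lambda>z. {a,b,z}) ` Nb a b" using tri_sup[OF abc(2)] by blast
      then show "T' = T" using True abc(1) by auto
    qed (use abc in auto)
    then show ?thesis by blast
  next
    case F1: False
    then obtain x where x: "x \<in> Nb a b" "x \<noteq> c" by blast
    show ?thesis
    proof (cases "Nb a c \<subseteq> {b}")
      case True
      have "priv T {a,c}" unfolding priv_def
      proof (intro conjI ballI impI)
        fix T' assume "T' \<in> tri" "{a,c} \<subseteq> T'"
        then have "T' \<in> (\<lambda>z. {a,c,z}) ` Nb a c" using tri_sup[OF abc(3)] by blast
        then show "T' = T" using True abc(1) by auto
      qed (use abc in auto)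
      then show ?thesis by blast
    next
      case False
      then obtain y where y: "y \<in> Nb a c" "y \<noteq> b" by blast
      show ?thesis using keyB[OF abc(2-4) x y] by blast
    qed
  qed
qed

definition pe :: "'a set \<Rightarrow> 'a set" where "pe T = (SOME e. priv T e)"

lemma pe: "T \<in> tri \<Longrightarrow> priv T (pe T)"
  unfolding pe_def using priv_ex someI_ex by metis

lemma edge_clique: "e \<in> E \<Longrightarrow> clique V E e"
proof -
  assume "e \<in> E"
  then obtain u v where "u \<noteq> v" "u \<in> V" "v \<in> V" "e = {u,v}" using edgeD by blast
  then show ?thesis unfolding clique_def using \<open>e \<in> E\<close> by (auto simp: insert_commute)
qed

lemma TE_sub: "TE \<subseteq> E" unfolding TE_def by blast

lemma finN0: "finite N0" unfolding N0_def using finE by simp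

lemma cover0: "edge_clique_cover V E (tri \<union> N0)"
  unfolding edge_clique_cover_def
proof (intro conjI ballI)
  fix K assume "K \<in> tri \<union> N0"
  then show "clique V E K" using edge_clique by (auto simp: triangles_def N0_def)
next
  fix e assume e: "e \<in> E"
  show "\<exists>K\<in>tri \<union> N0. e \<subseteq> K"
  proof (cases "e \<in> TE")
    case True then show ?thesis unfolding TE_def by blast
  next
    case False then show ?thesis using e unfolding N0_def by blast
  qed
qed

lemma card0: "card (tri \<union> N0) = card tri + card N0"
proof -
  have "tri \<inter> N0 = {}"
  proof (rule ccontr)
    assume "tri \<inter> N0 \<noteq> {}"
    then obtain x where "x \<in> tri" "x \<in> N0" by blast
    then have "card x = 3" "card x = 2" using tri_card[of x] card_edge[of x] by (auto simp: N0_def)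
    then show False by simp
  qed
  then show ?thesis using card_Un_disjoint tri_fin finN0 by blast
qed

lemma lower: assumes C: "finite C" "edge_clique_cover V E C"
  shows "card tri + card N0 \<le> card C"
proof -
  define f where "f x = (if x \<in> tri \<and> x \<notin> C then pe x else x)" for x
  have cl: "\<And>K. K \<in> C \<Longrightarrow> clique V E K" and cov: "\<And>e. e \<in> E \<Longrightarrow> \<exists>K\<in>C. e \<subseteq> K"
    using C(2) unfolding edge_clique_cover_def by blast+
  have img: "f ` (tri \<union> N0) \<subseteq> C"
  proof
    fix y assume "y \<in> f ` (tri \<union> N0)"
    then obtain x where x: "x \<in> tri \<union> N0" "y = f x" by blast
    show "y \<in> C"
    proof (cases "x \<in> tri \<and> x \<notin> C")
      case True
      then have y: "y = pe x" and p: "priv x y" using x pe f_def by auto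
      then have yE: "y \<in> E" unfolding priv_def by blast
      obtain K where K: "K \<in> C" "y \<subseteq> K" using cov[OF yE] by blast
      show ?thesis
      proof (cases "K = y")
        case True then show ?thesis using K by simp
      next
        case False
        then obtain T where T: "T \<in> tri" "y \<subseteq> T" "T \<subseteq> K" using ext_tri[OF yE cl[OF K(1)] K(2)] by blast
        then have "T = x" using p unfolding priv_def by blast
        then have "K = x" using tri_max[OF cl[OF K(1)]] T by blast
        then show ?thesis using True K by simp
      qed
    next
      case False
      then have y: "y = x" using x f_def by auto
      show ?thesis
      proof (cases "x \<in> tri")
        case True then show ?thesis using False y by blast
      next
        case nt: False
        then have xN: "x \<in> N0" using x by blast
        then have xE: "x \<in> E" "x \<notin> TE" unfolding N0_def by auto
        obtain K where K: "K \<in> C" "x \<subseteq> K" using cov[OF xE(1)] by blast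
        show ?thesis
        proof (cases "K = x")
          case True then show ?thesis using K y by simp
        next
          case False
          then obtain T where T: "T \<in> tri" "x \<subseteq> T" using ext_tri[OF xE(1) cl[OF K(1)] K(2)] by blast
          then have "x \<in> TE" using xE unfolding TE_def by blast
          then show ?thesis using xE by blast
        qed
      qed
    qed
  qed
  have inj: "inj_on f (tri \<union> N0)"
  proof
    fix x y assume x: "x \<in> tri \<union> N0" and y: "y \<in> tri \<union> N0" and fxy: "f x = f y"
    have A: "\<And>x y. x \<in> tri \<Longrightarrow> x \<notin> C \<Longrightarrow> y \<in> tri \<union> N0 \<Longrightarrow> \<not> (y \<in> tri \<and> y \<notin> C) \<Longrightarrow> pe x \<noteq> y"
    proof
      fix x y assume h: "x \<in> tri" "x \<notin> C" "y \<in> tri \<union> N0" "\<not> (y \<in> tri \<and> y \<notin> C)" "pe x = y"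
      have p: "priv x y" using pe h by metis
      then have yE: "y \<in> E" "y \<subseteq> x" unfolding priv_def by auto
      show False
      proof (cases "y \<in> tri")
        case True
        then show False using tri_card card_edge yE by fastforce
      next
        case False
        then have "y \<notin> TE" using h(3) unfolding N0_def by blast
        then show False using yE h(1) unfolding TE_def by blast
      qed
    qed
    show "x = y"
    proof (cases "x \<in> tri \<and> x \<notin> C")
      case cx: True
      show ?thesis
      proof (cases "y \<in> tri \<and> y \<notin> C")
        case cy: True
        then have "pe x = pe y" using cx fxy f_def by simp
        then have "priv x (pe x)" "priv y (pe x)" using pe cx cy by metis+
        then show ?thesis unfolding priv_def using cx cy by metis
      next
        case False
        have "f y = y" using False f_def by auto
        moreover have "f x = pe x" using cx f_def by auto
        ultimately have "pe x = y" using fxy by simp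
        then show ?thesis using A cx y False by blast
      qed
    next
      case cx: False
      show ?thesis
      proof (cases "y \<in> tri \<and> y \<notin> C")
        case cy: True
        have "f x = x" using cx f_def by auto
        moreover have "f y = pe y" using cy f_def by auto
        ultimately have "pe y = x" using fxy by simp
        then show ?thesis using A cy x cx by blast
      next
        case False
        have "f x = x" using cx f_def by auto
        moreover have "f y = y" using False f_def by auto
        ultimately show ?thesis using fxy by metis
      qed
    qed
  qed
  have "card (tri \<union> N0) \<le> card C" using card_inj_on_le[OF inj img C(1)] .
  then show ?thesis using card0 by simp
qed

lemma theta_val: "theta_e V E = card tri + card N0"
  unfolding theta_e_def
proof (rule Least_equality)
  show "\<exists>C. finite C \<and> card C = card tri + card N0 \<and> edge_clique_cover V E C"
    using cover0 card0 tri_fin finN0 by blast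
next
  fix k assume "\<exists>C. finite C \<and> card C = k \<and> edge_clique_cover V E C"
  then show "card tri + card N0 \<le> k" using lower by blast
qed


definition SE :: "'a set set" where
  "SE = {e \<in> E. \<exists>T1\<in>tri. \<exists>T2\<in>tri. T1 \<noteq> T2 \<and> e \<subseteq> T1 \<and> e \<subseteq> T2}"

lemma two_iff: "finite X \<Longrightarrow> (\<exists>x\<in>X. \<exists>y\<in>X. x \<noteq> y) \<longleftrightarrow> 2 \<le> card X"
proof
  assume f: "finite X" and "\<exists>x\<in>X. \<exists>y\<in>X. x \<noteq> y"
  then obtain x y where "x \<in> X" "y \<in> X" "x \<noteq> y" by blast
  then have "card {x,y} \<le> card X" using f by (intro card_mono) auto
  then show "2 \<le> card X" using \<open>x \<noteq> y\<close> by simp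
next
  assume f: "finite X" and c: "2 \<le> card X"
  then obtain x where x: "x \<in> X" by fastforce
  have "card (X - {x}) \<ge> 1" using c f x by simp
  then obtain y where "y \<in> X - {x}" by (metis all_not_in_conv card.empty not_one_le_zero)
  then show "\<exists>x\<in>X. \<exists>y\<in>X. x \<noteq> y" using x by blast
qed

lemma cnt_edge: assumes e: "e \<in> E"
  shows "card {T \<in> tri. e \<subseteq> T} = (if e \<in> TE then 1 else 0) + (if e \<in> SE then 1 else 0)"
proof -
  obtain a b where ab: "e = {a,b}" using edgeD[OF e] by blast
  define X where "X = {T \<in> tri. e \<subseteq> T}"
  have fX: "finite X" unfolding X_def using tri_fin by simp
  have c2: "card X \<le> 2" unfolding X_def using tri_cnt keyA e ab by simp
  have te: "e \<in> TE \<longleftrightarrow> card X \<noteq> 0" using fX e unfolding TE_def X_def by auto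
  have se: "e \<in> SE \<longleftrightarrow> 2 \<le> card X" using two_iff[OF fX] e unfolding SE_def X_def by auto
  show ?thesis unfolding X_def[symmetric] using te se c2 by auto
qed

lemma double_count: "3 * card tri = card TE + card SE"
proof -
  have "(\<Sum>T\<in>tri. card {e \<in> E. e \<subseteq> T}) = (\<Sum>T\<in>tri. \<Sum>e\<in>E. if e \<subseteq> T then 1 else 0)"
    using finE by (simp add: sum.inter_filter[symmetric])
  also have "\<dots> = (\<Sum>e\<in>E. \<Sum>T\<in>tri. if e \<subseteq> T then 1 else 0)" by (rule sum.swap)
  also have "\<dots> = (\<Sum>e\<in>E. card {T \<in> tri. e \<subseteq> T})"
    using tri_fin by (simp add: sum.inter_filter[symmetric])
  also have "\<dots> = (\<Sum>e\<in>E. (if e \<in> TE then 1 else 0) + (if e \<in> SE then 1 else 0))"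
    using cnt_edge by simp
  also have "\<dots> = (\<Sum>e\<in>E. (if e \<in> TE then 1 else 0)) + (\<Sum>e\<in>E. (if e \<in> SE then 1 else 0))"
    by (rule sum.distrib)
  also have "\<dots> = card {e \<in> E. e \<in> TE} + card {e \<in> E. e \<in> SE}"
    using finE by (simp add: sum.inter_filter[symmetric])
  also have "\<dots> = card TE + card SE"
    by (simp add: TE_def SE_def)
  finally have L: "(\<Sum>T\<in>tri. card {e \<in> E. e \<subseteq> T}) = card TE + card SE" .
  have "\<And>T. T \<in> tri \<Longrightarrow> card {e \<in> E. e \<subseteq> T} = 3"
  proof -
    fix T assume T: "T \<in> tri"
    obtain a b c where abc: "T = {a,b,c}" "{a,b} \<in> E" "{a,c} \<in> E" "{b,c} \<in> E" using T[unfolded tri_iff] by auto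
    have d: "a \<noteq> b" "a \<noteq> c" "b \<noteq> c" using abc edge_ne by auto
    have "{e \<in> E. e \<subseteq> T} = {{a,b},{a,c},{b,c}}"
    proof
      show "{e \<in> E. e \<subseteq> T} \<subseteq> {{a,b},{a,c},{b,c}}"
      proof
        fix e assume "e \<in> {e \<in> E. e \<subseteq> T}"
        then have eE: "e \<in> E" and eT: "e \<subseteq> {a,b,c}" using abc(1) by auto
        obtain u v where "u \<noteq> v" "e = {u,v}" using edgeD[OF eE] by auto
        then have uv: "u \<noteq> v" "e = {u,v}" "u \<in> {a,b,c}" "v \<in> {a,b,c}" using eT by auto
        then show "e \<in> {{a,b},{a,c},{b,c}}" by (elim insertE emptyE) (simp_all add: doubleton_eq_iff)
      qed
      show "{{a,b},{a,c},{b,c}} \<subseteq> {e \<in> E. e \<subseteq> T}" using abc by auto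
    qed
    then show "card {e \<in> E. e \<subseteq> T} = 3" using d by (simp add: doubleton_eq_iff)
  qed
  then have "(\<Sum>T\<in>tri. card {e \<in> E. e \<subseteq> T}) = 3 * card tri" by simp
  then show ?thesis using L by simp
qed

definition g :: "'a set \<Rightarrow> 'a set set" where
  "g e = {f \<in> E. f \<subseteq> \<Union>{T \<in> tri. e \<subseteq> T}}"

lemma SE_iff: assumes ab: "{a,b} \<in> E" shows "{a,b} \<in> SE \<longleftrightarrow> card (Nb a b) = 2"
proof -
  define X where "X = {T \<in> tri. {a,b} \<subseteq> T}"
  have fX: "finite X" unfolding X_def using tri_fin by simp
  have c: "card X = card (Nb a b)" unfolding X_def using tri_cnt[OF ab] .
  have "{a,b} \<in> SE \<longleftrightarrow> 2 \<le> card X" using two_iff[OF fX] ab unfolding SE_def X_def by auto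
  then show ?thesis using c keyA[OF ab] by simp
qed

lemma g_val: assumes ab: "{a,b} \<in> E" and N: "Nb a b = {c,x}" and cx: "c \<noteq> x"
  shows "g {a,b} = dia a b c x"
proof -
  have U: "\<Union>{T \<in> tri. {a,b} \<subseteq> T} = {a,b,c,x}" using tri_sup[OF ab] N by auto
  have e: "{a,c} \<in> E" "{b,c} \<in> E" "{a,x} \<in> E" "{b,x} \<in> E" using N NbD[of c a b] NbD[of x a b] by auto
  have ncx: "{c,x} \<notin> E" using K4[of a b c x] ab e by blast
  show ?thesis unfolding g_def U
  proof
    show "{f \<in> E. f \<subseteq> {a,b,c,x}} \<subseteq> dia a b c x"
    proof
      fix f assume f: "f \<in> {f \<in> E. f \<subseteq> {a,b,c,x}}"
      then have fE: "f \<in> E" and fT: "f \<subseteq> {a,b,c,x}" by auto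
      obtain u v where "u \<noteq> v" "f = {u,v}" using edgeD[OF fE] by auto
      then have uv: "u \<noteq> v" "f = {u,v}" "u \<in> {a,b,c,x}" "v \<in> {a,b,c,x}" using fT by auto
      have "f \<noteq> {c,x}" using f ncx by blast
      then show "f \<in> dia a b c x" using uv unfolding dia_def
        by (elim insertE emptyE) (simp_all add: doubleton_eq_iff)
    qed
    show "dia a b c x \<subseteq> {f \<in> E. f \<subseteq> {a,b,c,x}}" using ab e unfolding dia_def by auto
  qed
qed

lemma card2E: "card X = 2 \<Longrightarrow> r \<in> X \<Longrightarrow> \<exists>y\<in>X. y \<noteq> r"
  by (auto simp: card_2_iff)

lemma g_inj: "inj_on g SE"
proof
  fix e e' assume e: "e \<in> SE" and e': "e' \<in> SE" and geq: "g e = g e'"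
  have "e \<in> E" using e unfolding SE_def by blast
  then obtain a b where ab: "e = {a,b}" using edgeD by meson
  have abE: "{a,b} \<in> E" using e ab unfolding SE_def by blast
  have "card (Nb a b) = 2" using SE_iff[OF abE] e ab by simp
  then obtain c x where N: "Nb a b = {c,x}" "c \<noteq> x" by (auto simp: card_2_iff)
  have e2: "{a,c} \<in> E" "{b,c} \<in> E" "{a,x} \<in> E" "{b,x} \<in> E" using N NbD[of c a b] NbD[of x a b] by auto
  have cN: "c \<in> Nb a b" and xN: "x \<in> Nb a b" using N by auto
  have e'E: "e' \<in> E" using e' unfolding SE_def by blast
  have "e' \<in> g e'" using e' unfolding SE_def g_def by blast
  then have "e' \<in> dia a b c x" using geq g_val[OF abE N] ab by simp
  then consider "e' = {a,b}" | "e' = {a,c}" | "e' = {b,c}" | "e' = {a,x}" | "e' = {b,x}"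
    unfolding dia_def by auto
  then show "e = e'"
  proof cases
    case 1 then show ?thesis using ab by simp
  next
    case 2
    have "card (Nb a c) = 2" using SE_iff[OF e2(1)] e' 2 by simp
    moreover have "b \<in> Nb a c" using abE e2 by (intro NbI) (auto simp: insert_commute)
    ultimately obtain y where "y \<in> Nb a c" "y \<noteq> b" using card2E[of "Nb a c" b] by blast
    moreover have "x \<noteq> c" using N(2) by simp
    ultimately show ?thesis using keyB[OF abE e2(1) e2(2) xN, of y] by blast
  next
    case 3
    have "card (Nb b c) = 2" using SE_iff[OF e2(2)] e' 3 by simp
    moreover have "a \<in> Nb b c" using abE e2 by (intro NbI) (auto simp: insert_commute)
    ultimately obtain y where y: "y \<in> Nb b c" "y \<noteq> a" using card2E[of "Nb b c" a] by blast
    have ba: "{b,a} \<in> E" using abE by (simp add: insert_commute)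
    have xb: "x \<in> Nb b a" using xN Nb_sym by blast
    have ac: "{a,c} \<in> E" using e2 by simp
    have "x \<noteq> c" using N(2) by simp
    then show ?thesis using keyB[OF ba e2(2) ac xb _ y] by blast
  next
    case 4
    have "card (Nb a x) = 2" using SE_iff[OF e2(3)] e' 4 by simp
    moreover have "b \<in> Nb a x" using abE e2 by (intro NbI) (auto simp: insert_commute)
    ultimately obtain y where y: "y \<in> Nb a x" "y \<noteq> b" using card2E[of "Nb a x" b] by blast
    show ?thesis using keyB[OF abE e2(3) e2(4) cN N(2) y] by blast
  next
    case 5
    have "card (Nb b x) = 2" using SE_iff[OF e2(4)] e' 5 by simp
    moreover have "a \<in> Nb b x" using abE e2 by (intro NbI) (auto simp: insert_commute)
    ultimately obtain y where y: "y \<in> Nb b x" "y \<noteq> a" using card2E[of "Nb b x" a] by blast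
    have ba: "{b,a} \<in> E" using abE by (simp add: insert_commute)
    have cb: "c \<in> Nb b a" using cN Nb_sym by blast
    have ax: "{a,x} \<in> E" using e2 by simp
    show ?thesis using keyB[OF ba e2(4) ax cb N(2) y] by blast
  qed
qed

lemma g_img: "g ` SE = diamonds V E"
proof
  show "g ` SE \<subseteq> diamonds V E"
  proof
    fix D assume "D \<in> g ` SE"
    then obtain e where e: "e \<in> SE" "D = g e" by blast
    have "e \<in> E" using e unfolding SE_def by blast
  then obtain a b where ab: "e = {a,b}" using edgeD by meson
    have abE: "{a,b} \<in> E" using e ab unfolding SE_def by blast
    have "card (Nb a b) = 2" using SE_iff[OF abE] e ab by simp
    then obtain c x where N: "Nb a b = {c,x}" "c \<noteq> x" by (auto simp: card_2_iff)
    have e2: "{a,c} \<in> E" "{b,c} \<in> E" "{a,x} \<in> E" "{b,x} \<in> E" using N NbD[of c a b] NbD[of x a b] by auto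
    have "D = dia a b c x" using g_val[OF abE N] e ab by simp
    then show "D \<in> diamonds V E" using dia_in abE e2 N(2) by simp
  qed
  show "diamonds V E \<subseteq> g ` SE"
  proof
    fix D assume "D \<in> diamonds V E"
    then obtain a b c x where h: "{a,b} \<in> E" "{a,c} \<in> E" "{b,c} \<in> E" "{a,x} \<in> E" "{b,x} \<in> E" "c \<noteq> x" "D = dia a b c x"
      using dia_form by blast
    have sub: "{c,x} \<subseteq> Nb a b" using h by (auto intro: NbI)
    have "card (Nb a b) \<le> 2" using keyA[OF h(1)] .
    then have N: "Nb a b = {c,x}" using sub h(6) Nb_fin
      by (metis card_2_iff card_seteq)
    have "{a,b} \<in> SE" using SE_iff[OF h(1)] N h(6) by simp
    moreover have "g {a,b} = D" using g_val[OF h(1) N h(6)] h(7) by simp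
    ultimately show "D \<in> g ` SE" by blast
  qed
qed

lemma SE_card: "card SE = num_diamonds V E"
  unfolding num_diamonds_def using card_image[OF g_inj] g_img by simp

lemma main: "int (theta_e V E) = int (card E) - 2 * int (num_triangles V E) + int (num_diamonds V E)"
proof -
  have "card N0 = card E - card TE" unfolding N0_def using TE_sub finE by (simp add: card_Diff_subset finite_subset)
  moreover have "card TE \<le> card E" using TE_sub finE card_mono by blast
  ultimately have "int (card N0) = int (card E) - int (card TE)" by simp
  moreover have "int (card TE) = 3 * int (card tri) - int (num_diamonds V E)"
    using double_count SE_card by linarith
  ultimately show ?thesis using theta_val unfolding num_triangles_def by simp
qed

end

theorem mainTheorem10:
  fixes V :: "'a set" and E :: "'a set set"
  assumes "simple_graph V E"
    and "K4_free V E"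
    and "diamonds_edge_disjoint V E"
  shows "int (theta_e V E) = int (card E) - 2 * int (num_triangles V E) + int (num_diamonds V E)"
proof -
  interpret G V E using assms by unfold_locales
  show ?thesis by (rule main)
qed

end
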